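(* Let $\mathcal{N}=(\mathcal{S},\mathcal{C},\mathcal{R})$ be an open chemical reaction network. Then $\ker(J_c(f_\kappa))\cap\Gamma\neq\{0\}$ for all $\kappa\in\mathbb{R}_+^{\mathcal{R}}$ and all $c\in\mathbb{R}^n_+$ if and only if for every set of $n$ reactions $y^1\to y'^1,\dots,y^n\to y'^n$ of $\mathcal{N}$ such that the vectors $y^1-y'^1,\dots,y^n-y'^n$ are linearly independent, the complexes $y^1,\dots,y^n$ are linearly dependent.
   Context: A chemical reaction network $\mathcal{N}=(\mathcal{S},\mathcal{C},\mathcal{R})$ consists of a finite set of species $\mathcal{S}=\{S_1,\dots,S_n\}$, a finite set of complexes $\mathcal{C}\subset\mathbb{Z}_{\ge 0}^n$ (species $S_i$ identified with the $i$-th standard basis vector), and a finite set of reactions $\mathcal{R}\subset\mathcal{C}\times\mathcal{C}$, written $y\to y'$, with $y\ne y'$. A rate vector is $\kappa=(k_{y\to y'})\in\mathbb{R}_+^{\mathcal{R}}$ ($\mathbb{R}_+$ the positive reals); the mass-action species formation rate function is $f_\kappa(c)=\sum_{y\to y'\in\mathcal{R}}k_{y\to y'}c^y(y'-y)$, $c^y=\prod_i c_i^{y_i}$, with Jacobian $J_c(f_\kappa)$ at $c$. The stoichiometric subspace is $\Gamma=\mathrm{span}\{y'-y:y\to y'\in\mathcal{R}\}$; the network is open if $\Gamma=\mathbb{R}^n$. *)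

theory Defs
  imports "HOL-Analysis.Analysis"
begin

text \<open>Species are indexed by a finite type 'n (so n = CARD('n)); complexes are
vectors in Z_{>=0}^n, represented as nat ^ 'n; a reaction y -> y' is the pair (y, y').\<close>

type_synonym 'n complex = "nat ^ 'n"
type_synonym 'n reaction = "'n complex \<times> 'n complex"

definition rvec :: "'n complex \<Rightarrow> real ^ 'n" where
  "rvec y = (\<chi> i. real (y $ i))"

definition crn :: "'n::finite complex set \<Rightarrow> 'n reaction set \<Rightarrow> bool" where
  "crn C R \<longleftrightarrow> finite C \<and> R \<subseteq> C \<times> C \<and> (\<forall>(y, y') \<in> R. y \<noteq> y')"

definition monom :: "real ^ 'n \<Rightarrow> 'n::finite complex \<Rightarrow> real" where
  "monom c y = (\<Prod>i\<in>UNIV. (c $ i) ^ (y $ i))"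

definition rate_fun :: "'n::finite reaction set \<Rightarrow> ('n reaction \<Rightarrow> real) \<Rightarrow> real ^ 'n \<Rightarrow> real ^ 'n" where
  "rate_fun R \<kappa> c = (\<Sum>(y, y') \<in> R. (\<kappa> (y, y') * monom c y) *\<^sub>R (rvec y' - rvec y))"

definition jacobian :: "(real ^ 'n \<Rightarrow> real ^ 'n) \<Rightarrow> real ^ 'n \<Rightarrow> real ^ 'n ^ 'n::finite" where
  "jacobian f c = matrix (frechet_derivative f (at c))"

definition stoich_space :: "'n::finite reaction set \<Rightarrow> (real ^ 'n) set" where
  "stoich_space R = span {rvec y' - rvec y | y y'. (y, y') \<in> R}"

definition open_crn :: "'n::finite reaction set \<Rightarrow> bool" where
  "open_crn R \<longleftrightarrow> stoich_space R = UNIV"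

definition lin_indep_family :: "('n \<Rightarrow> real ^ 'm) \<Rightarrow> bool" where
  "lin_indep_family v \<longleftrightarrow> inj v \<and> independent (range v)"

end

theory Submission
  imports Defs "HOL-Library.FuncSet"
begin

lemma det_rows_nz_iff:
  fixes x :: "'n::finite \<Rightarrow> real ^ 'n"
  shows "det (\<chi> i. x i) \<noteq> 0 \<longleftrightarrow> lin_indep_family x"
proof
  have rw: "rows (\<chi> i. x i) = range x" by (auto simp: rows_def row_def)
  assume d: "det (\<chi> i. x i) \<noteq> 0"
  have "inj x"
  proof (rule injI, rule ccontr)
    fix i j assume "x i = x j" "i \<noteq> j"
    then have "det (\<chi> i. x i) = 0" by (intro det_identical_rows[of i j]) (auto simp: row_def)
    with d show False by simp
  qed
  moreover have "independent (range x)"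
    using det_dependent_rows[of "\<chi> i. x i"] d rw by (auto simp: dependent_vec_eq)
  ultimately show "lin_indep_family x" by (simp add: lin_indep_family_def)
next
  have rw: "rows (\<chi> i. x i) = range x" by (auto simp: rows_def row_def)
  assume "lin_indep_family x"
  then have "inj x" "independent (range x)" by (auto simp: lin_indep_family_def)
  then have "rank (\<chi> i. x i) = CARD('n)"
    by (simp add: row_rank_def rw dim_eq_card_independent card_image)
  then show "det (\<chi> i. x i) \<noteq> 0" by (simp add: det_eq_0_rank)
qed


lemma det_expand_rows:
  fixes b :: "'a \<Rightarrow> real" and u w :: "'a \<Rightarrow> real ^ 'n::finite"
  assumes fin: "finite R"
  shows "det (\<chi> i j. \<Sum>r\<in>R. b r * u r $ i * w r $ j) =
    (\<Sum>f\<in>PiE UNIV (\<lambda>_. R). (\<Prod>i\<in>UNIV. b (f i) * u (f i) $ i) * det (\<chi> i. w (f i)))"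
proof -
  let ?F = "PiE (UNIV::'n set) (\<lambda>_. R)"
  let ?P = "{p. p permutes (UNIV::'n set)}"
  have "det (\<chi> i j. \<Sum>r\<in>R. b r * u r $ i * w r $ j) =
     (\<Sum>p\<in>?P. of_int (sign p) * (\<Prod>i\<in>UNIV. \<Sum>r\<in>R. b r * u r $ i * w r $ p i))"
    by (simp add: det_def)
  also have "\<dots> = (\<Sum>p\<in>?P. of_int (sign p) * (\<Sum>f\<in>?F. \<Prod>i\<in>UNIV. b (f i) * u (f i) $ i * w (f i) $ p i))"
    using fin by (simp add: prod_sum_PiE)
  also have "\<dots> = (\<Sum>p\<in>?P. \<Sum>f\<in>?F. (\<Prod>i\<in>UNIV. b (f i) * u (f i) $ i) * (of_int (sign p) * (\<Prod>i\<in>UNIV. w (f i) $ p i)))"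
    by (simp add: sum_distrib_left prod.distrib mult_ac)
  also have "\<dots> = (\<Sum>f\<in>?F. \<Sum>p\<in>?P. (\<Prod>i\<in>UNIV. b (f i) * u (f i) $ i) * (of_int (sign p) * (\<Prod>i\<in>UNIV. w (f i) $ p i)))"
    by (rule sum.swap)
  also have "\<dots> = (\<Sum>f\<in>?F. (\<Prod>i\<in>UNIV. b (f i) * u (f i) $ i) * det (\<chi> i. w (f i)))"
    by (simp add: det_def sum_distrib_left)
  finally show ?thesis .
qed


lemma sum_PiE_comp_perm:
  fixes g :: "('n::finite \<Rightarrow> 'a) \<Rightarrow> real"
  assumes p: "p permutes (UNIV::'n set)"
  shows "(\<Sum>f\<in>PiE UNIV (\<lambda>_. R). g f) = (\<Sum>f\<in>PiE UNIV (\<lambda>_. R). g (f \<circ> p))"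
proof -
  have "bij_betw (\<lambda>f. f \<circ> p) (PiE UNIV (\<lambda>_. R)) (PiE UNIV (\<lambda>_. R))"
  proof (rule bij_betwI[where g = "\<lambda>f. f \<circ> inv p"])
    show "(\<lambda>f. f \<circ> p) \<in> PiE UNIV (\<lambda>_. R) \<rightarrow> PiE UNIV (\<lambda>_. R)" by (auto simp: PiE_UNIV_domain)
    show "(\<lambda>f. f \<circ> inv p) \<in> PiE UNIV (\<lambda>_. R) \<rightarrow> PiE UNIV (\<lambda>_. R)" by (auto simp: PiE_UNIV_domain)
    show "\<And>x. x \<in> PiE UNIV (\<lambda>_. R) \<Longrightarrow> x \<circ> p \<circ> inv p = x"
      using p by (simp add: o_assoc[symmetric] permutes_inverses(1) fun_eq_iff)
    show "\<And>x. x \<in> PiE UNIV (\<lambda>_. R) \<Longrightarrow> x \<circ> inv p \<circ> p = x"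
      using p by (simp add: o_assoc[symmetric] permutes_inverses(2) fun_eq_iff)
  qed
  from sum.reindex_bij_betw[OF this, of g] show ?thesis by simp
qed

lemma det_cols:
  fixes x :: "'n::finite \<Rightarrow> real ^ 'n"
  shows "(\<Sum>p\<in>{p. p permutes (UNIV::'n set)}. of_int (sign p) * (\<Prod>i\<in>UNIV. x (p i) $ i)) = det (\<chi> i. x i)"
  by (subst det_transpose[symmetric]) (simp add: det_def transpose_def)

lemma cauchy_binet_sym:
  fixes b :: "'a \<Rightarrow> real" and u w :: "'a \<Rightarrow> real ^ 'n::finite"
  assumes fin: "finite R"
  shows "of_nat (fact CARD('n)) * det (\<chi> i j. \<Sum>r\<in>R. b r * u r $ i * w r $ j) =
    (\<Sum>f\<in>PiE UNIV (\<lambda>_. R). (\<Prod>i\<in>UNIV. b (f i)) * det (\<chi> i. w (f i)) * det (\<chi> i. u (f i)))"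
proof -
  let ?F = "PiE (UNIV::'n set) (\<lambda>_. R)"
  let ?P = "{p. p permutes (UNIV::'n set)}"
  define T where "T f = (\<Prod>i\<in>UNIV. b (f i) * u (f i) $ i) * det (\<chi> i. w (f i))" for f :: "'n \<Rightarrow> 'a"
  have e: "det (\<chi> i j. \<Sum>r\<in>R. b r * u r $ i * w r $ j) = (\<Sum>f\<in>?F. T f)"
    unfolding T_def by (rule det_expand_rows[OF fin])
  have cP: "card ?P = fact CARD('n)" by (rule card_permutations) auto
  have "of_nat (fact CARD('n)) * (\<Sum>f\<in>?F. T f) = (\<Sum>p\<in>?P. \<Sum>f\<in>?F. T f)"
    by (simp add: cP)
  also have "\<dots> = (\<Sum>p\<in>?P. \<Sum>f\<in>?F. T (f \<circ> p))"
    by (rule sum.cong[OF refl], rule sum_PiE_comp_perm) simp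
  also have "\<dots> = (\<Sum>f\<in>?F. \<Sum>p\<in>?P. T (f \<circ> p))" by (rule sum.swap)
  also have "\<dots> = (\<Sum>f\<in>?F. (\<Prod>i\<in>UNIV. b (f i)) * det (\<chi> i. w (f i)) * det (\<chi> i. u (f i)))"
  proof (rule sum.cong[OF refl])
    fix f assume "f \<in> ?F"
    have "T (f \<circ> p) = (\<Prod>i\<in>UNIV. b (f i)) * det (\<chi> i. w (f i)) * (of_int (sign p) * (\<Prod>i\<in>UNIV. u (f (p i)) $ i))"
      if p: "p \<in> ?P" for p
    proof -
      have p': "p permutes (UNIV::'n set)" using p by simp
      have 1: "(\<Prod>i\<in>UNIV. b (f (p i))) = (\<Prod>i\<in>UNIV. b (f i))"
        using prod.permute[OF p', of "\<lambda>i. b (f i)"] by (simp add: o_def)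
      have 2: "det (\<chi> i. w (f (p i))) = of_int (sign p) * det (\<chi> i. w (f i))"
        using det_permute_rows[OF p', of "\<chi> i. w (f i)"] by simp
      show ?thesis unfolding T_def using 1 2 by (simp add: prod.distrib mult_ac)
    qed
    then have "(\<Sum>p\<in>?P. T (f \<circ> p)) = (\<Sum>p\<in>?P. (\<Prod>i\<in>UNIV. b (f i)) * det (\<chi> i. w (f i)) * (of_int (sign p) * (\<Prod>i\<in>UNIV. u (f (p i)) $ i)))"
      by (rule sum.cong[OF refl])
    also have "\<dots> = (\<Prod>i\<in>UNIV. b (f i)) * det (\<chi> i. w (f i)) * det (\<chi> i. u (f i))"
      by (simp add: sum_distrib_left[symmetric] det_cols[of "\<lambda>i. u (f i)"])
    finally show "(\<Sum>p\<in>?P. T (f \<circ> p)) = (\<Prod>i\<in>UNIV. b (f i)) * det (\<chi> i. w (f i)) * det (\<chi> i. u (f i))" .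
  qed
  finally show ?thesis using e by simp
qed


lemma monom_deriv:
  fixes c :: "real ^ 'n::finite"
  shows "((\<lambda>c. monom c y) has_derivative
     (\<lambda>v. \<Sum>i\<in>UNIV. (real (y $ i) * (c $ i) ^ (y $ i - 1) * v $ i) * (\<Prod>j\<in>UNIV - {i}. (c $ j) ^ (y $ j)))) (at c)"
  unfolding monom_def
  by (rule has_derivative_prod, rule derivative_eq_intros) (auto intro!: derivative_eq_intros bounded_linear_imp_has_derivative)


lemma monom_deriv_eq:
  fixes c v :: "real ^ 'n::finite"
  assumes cpos: "\<forall>i. c $ i > 0"
  shows "(\<Sum>i\<in>UNIV. (real (y $ i) * (c $ i) ^ (y $ i - 1) * v $ i) * (\<Prod>j\<in>UNIV - {i}. (c $ j) ^ (y $ j)))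
     = monom c y * (\<Sum>j\<in>UNIV. real (y $ j) * (v $ j / c $ j))"
  unfolding sum_distrib_left
proof (rule sum.cong[OF refl])
  fix i :: 'n
  have m: "monom c y = (c $ i) ^ (y $ i) * (\<Prod>j\<in>UNIV - {i}. (c $ j) ^ (y $ j))"
    unfolding monom_def by (simp add: prod.remove)
  have ci: "c $ i > 0" using cpos by simp
  have k: "real (y $ i) * (c $ i) ^ (y $ i - 1) = real (y $ i) * (c $ i) ^ (y $ i) / c $ i"
  proof (cases "y $ i")
    case 0 then show ?thesis by simp
  next
    case (Suc k) then show ?thesis using ci by simp
  qed
  show "real (y $ i) * (c $ i) ^ (y $ i - 1) * v $ i * (\<Prod>j\<in>UNIV - {i}. (c $ j) ^ (y $ j)) =
        monom c y * (real (y $ i) * (v $ i / c $ i))"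
    unfolding m using k by (simp add: field_simps)
qed

lemma rate_fun_alt: "rate_fun R \<kappa> = (\<lambda>c. \<Sum>r\<in>R. (\<kappa> r * monom c (fst r)) *\<^sub>R (rvec (snd r) - rvec (fst r)))"
  by (simp add: rate_fun_def split_def fun_eq_iff)

lemma jacobian_eq:
  fixes c :: "real ^ 'n::finite" and R :: "'n reaction set"
  assumes fin: "finite R" and cpos: "\<forall>i. c $ i > 0"
  shows "jacobian (rate_fun R \<kappa>) c *v v =
    (\<chi> i j. \<Sum>r\<in>R. (\<kappa> r * monom c (fst r)) * (rvec (snd r) - rvec (fst r)) $ i * rvec (fst r) $ j)
      *v (\<chi> j. v $ j / c $ j)"
proof -
  define D where "D y v = (\<Sum>i\<in>UNIV. (real (y $ i) * (c $ i) ^ (y $ i - 1) * v $ i) * (\<Prod>j\<in>UNIV - {i}. (c $ j) ^ (y $ j)))"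
    for y :: "'n complex" and v :: "real ^ 'n"
  define L where "L v = (\<Sum>r\<in>R. (\<kappa> r * D (fst r) v) *\<^sub>R (rvec (snd r) - rvec (fst r)))" for v
  have der: "(rate_fun R \<kappa> has_derivative L) (at c)"
    unfolding rate_fun_alt L_def D_def
    by (auto intro!: derivative_eq_intros monom_deriv)
  have lin: "linear L" using der has_derivative_linear by blast
  have lin2: "Vector_Spaces.linear (*s) (*s) L" using lin by (simp add: linear_matrix_vector_mul_eq)
  have J: "jacobian (rate_fun R \<kappa>) c = matrix L"
    unfolding jacobian_def using frechet_derivative_at[OF der] by simp
  have "L v = (\<chi> i j. \<Sum>r\<in>R. (\<kappa> r * monom c (fst r)) * (rvec (snd r) - rvec (fst r)) $ i * rvec (fst r) $ j)
      *v (\<chi> j. v $ j / c $ j)"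
  proof (subst vec_eq_iff, intro allI)
    fix k
    have "L v $ k = (\<Sum>r\<in>R. \<kappa> r * D (fst r) v * (rvec (snd r) - rvec (fst r)) $ k)"
      unfolding L_def by (simp add: sum_component)
    also have "\<dots> = (\<Sum>r\<in>R. \<kappa> r * (monom c (fst r) * (\<Sum>j\<in>UNIV. rvec (fst r) $ j * (v $ j / c $ j))) * (rvec (snd r) - rvec (fst r)) $ k)"
      unfolding D_def monom_deriv_eq[OF cpos] by (simp add: rvec_def)
    also have "\<dots> = (\<Sum>j\<in>UNIV. (\<Sum>r\<in>R. (\<kappa> r * monom c (fst r)) * (rvec (snd r) - rvec (fst r)) $ k * rvec (fst r) $ j) * (v $ j / c $ j))"
      by (simp add: sum_distrib_left sum_distrib_right mult_ac sum.swap[of _ UNIV R])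
    finally show "L v $ k = ((\<chi> i j. \<Sum>r\<in>R. (\<kappa> r * monom c (fst r)) * (rvec (snd r) - rvec (fst r)) $ i * rvec (fst r) $ j)
      *v (\<chi> j. v $ j / c $ j)) $ k"
      by (simp add: matrix_vector_mult_def)
  qed
  then show ?thesis using J matrix_works[OF lin2] by simp
qed

lemma det_neg_rows:
  fixes x :: "'n::finite \<Rightarrow> real ^ 'n"
  shows "det (\<chi> i. - x i) = (-1) ^ CARD('n) * det (\<chi> i. x i)"
proof -
  have "\<And>p. (\<Prod>i\<in>UNIV. - (x i $ p i)) = (-1) ^ CARD('n) * (\<Prod>i\<in>UNIV. x i $ p i)"
    by (subst prod.distrib[of "\<lambda>_. -1::real" , symmetric, simplified]) (simp add: prod_constant)
  then show ?thesis by (simp add: det_def sum_distrib_left mult_ac)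
qed

lemma det_zero_iff_ker:
  fixes A :: "real^'n::finite^'n"
  shows "det A = 0 \<longleftrightarrow> (\<exists>x. x \<noteq> 0 \<and> A *v x = 0)"
  using invertible_det_nz[of A] invertible_left_inverse[of A] matrix_left_invertible_ker[of A] by auto

lemma sum_onto_range:
  fixes r :: "'n::finite \<Rightarrow> 'a" and x y :: "'a \<Rightarrow> real ^ 'n"
  assumes inj: "inj r"
  shows "(\<Sum>f\<in>{f. \<forall>i. f i \<in> range r}. det (\<chi> i. x (f i)) * det (\<chi> i. y (f i)))
     = of_nat (fact CARD('n)) * (det (\<chi> i. x (r i)) * det (\<chi> i. y (r i)))"
proof -
  let ?P = "{p. p permutes (UNIV::'n set)}"
  define h where "h f = det (\<chi> i. x (f i)) * det (\<chi> i. y (f i))" for f :: "'n \<Rightarrow> 'a"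
  have bij: "bij_betw (\<lambda>g. r \<circ> g) (UNIV :: ('n \<Rightarrow> 'n) set) {f. \<forall>i. f i \<in> range r}"
  proof (rule bij_betwI[where g = "\<lambda>f. inv r \<circ> f"])
    show "(\<lambda>g. r \<circ> g) \<in> UNIV \<rightarrow> {f. \<forall>i. f i \<in> range r}" by auto
    show "(\<lambda>f. inv r \<circ> f) \<in> {f. \<forall>i. f i \<in> range r} \<rightarrow> UNIV" by auto
    show "\<And>g. inv r \<circ> (r \<circ> g) = g" using inj by (simp add: fun_eq_iff)
    show "\<And>f. f \<in> {f. \<forall>i. f i \<in> range r} \<Longrightarrow> r \<circ> (inv r \<circ> f) = f"
      by (auto simp: fun_eq_iff f_inv_into_f)
  qed
  have "(\<Sum>f\<in>{f. \<forall>i. f i \<in> range r}. h f) = (\<Sum>g\<in>UNIV. h (r \<circ> g))"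
    using sum.reindex_bij_betw[OF bij, of h] by simp
  also have "\<dots> = (\<Sum>g\<in>?P. h (r \<circ> g))"
  proof (rule sum.mono_neutral_right)
    show "finite (UNIV :: ('n \<Rightarrow> 'n) set)" by simp
    show "?P \<subseteq> UNIV" by simp
    show "\<forall>g\<in>UNIV - ?P. h (r \<circ> g) = 0"
    proof
      fix g assume "g \<in> UNIV - ?P"
      then have "\<not> inj g"
        using finite_UNIV_inj_surj[of g] bij_imp_permutes[of g UNIV] bij_def by auto
      then obtain i j where ij: "i \<noteq> j" "g i = g j" by (auto simp: inj_def)
      have "det (\<chi> k. x ((r \<circ> g) k)) = 0"
        by (rule det_identical_rows[OF ij(1)]) (simp add: row_def ij(2))
      then show "h (r \<circ> g) = 0" by (simp add: h_def)
    qed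
  qed
  also have "\<dots> = (\<Sum>g\<in>?P. det (\<chi> i. x (r i)) * det (\<chi> i. y (r i)))"
  proof (rule sum.cong[OF refl])
    fix g assume "g \<in> ?P"
    then have g: "g permutes UNIV" by simp
    have 1: "det (\<chi> k. x (r (g k))) = of_int (sign g) * det (\<chi> i. x (r i))"
      using det_permute_rows[OF g, of "\<chi> i. x (r i)"] by simp
    have 2: "det (\<chi> k. y (r (g k))) = of_int (sign g) * det (\<chi> i. y (r i))"
      using det_permute_rows[OF g, of "\<chi> i. y (r i)"] by simp
    have 3: "(of_int (sign g) :: real) * of_int (sign g) = 1"
      by (simp flip: of_int_mult)
    show "h (r \<circ> g) = det (\<chi> i. x (r i)) * det (\<chi> i. y (r i))"
      unfolding h_def o_def 1 2
      by (metis (no_types, lifting) 3 mult.assoc mult.left_commute mult_1)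
  qed
  also have "\<dots> = of_nat (fact CARD('n)) * (det (\<chi> i. x (r i)) * det (\<chi> i. y (r i)))"
    by (simp add: card_permutations)
  finally show ?thesis unfolding h_def .
qed


theorem corollary8p2:
  fixes C :: "'n::finite complex set" and R :: "'n reaction set"
  assumes "crn C R" and "open_crn R"
  shows "(\<forall>\<kappa> c. (\<forall>r\<in>R. \<kappa> r > 0) \<longrightarrow> (\<forall>i. c $ i > 0) \<longrightarrow>
            (\<exists>v. v \<in> stoich_space R \<and> v \<noteq> 0 \<and> jacobian (rate_fun R \<kappa>) c *v v = 0))
     \<longleftrightarrow>
         (\<forall>r :: 'n \<Rightarrow> 'n reaction. (\<forall>i. r i \<in> R) \<longrightarrow>
            lin_indep_family (\<lambda>i. rvec (fst (r i)) - rvec (snd (r i))) \<longrightarrow>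
            \<not> lin_indep_family (\<lambda>i. rvec (fst (r i))))"
proof -
  have fin: "finite R" using assms(1) unfolding crn_def by (meson finite_SigmaI finite_subset)
  have stU: "stoich_space R = UNIV" using assms(2) by (simp add: open_crn_def)
  define u where "u r = rvec (snd r) - rvec (fst r)" for r :: "'n reaction"
  define w where "w r = rvec (fst r)" for r :: "'n reaction"
  define Mb where "Mb b = (\<chi> i j. \<Sum>r\<in>R. b r * u r $ i * w r $ j)" for b :: "'n reaction \<Rightarrow> real"
  define F where "F = PiE (UNIV::'n set) (\<lambda>_. R)"
  have F_eq: "F = {f. \<forall>i. f i \<in> R}" by (auto simp: F_def PiE_UNIV_domain)
  have finF: "finite F" using fin by (simp add: F_def finite_PiE)
  have CB: "of_nat (fact CARD('n)) * det (Mb b) =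
    (\<Sum>f\<in>F. (\<Prod>i\<in>UNIV. b (f i)) * det (\<chi> i. w (f i)) * det (\<chi> i. u (f i)))" for b
    unfolding Mb_def F_def by (rule cauchy_binet_sym[OF fin])
  have JE: "jacobian (rate_fun R \<kappa>) c *v v = Mb (\<lambda>r. \<kappa> r * monom c (fst r)) *v (\<chi> j. v $ j / c $ j)"
    if "\<forall>i. c $ i > 0" for \<kappa> c v
    unfolding Mb_def u_def w_def by (rule jacobian_eq[OF fin that])
  have Uiff: "lin_indep_family (\<lambda>i. rvec (fst (f i)) - rvec (snd (f i))) \<longleftrightarrow> det (\<chi> i. u (f i)) \<noteq> 0" for f
  proof -
    have "(\<lambda>i. rvec (fst (f i)) - rvec (snd (f i))) = (\<lambda>i. - u (f i))" by (simp add: u_def fun_eq_iff)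
    then show ?thesis
      using det_rows_nz_iff[of "\<lambda>i. rvec (fst (f i)) - rvec (snd (f i))"] det_neg_rows[of "\<lambda>i. u (f i)"]
      by simp
  qed
  have Wiff: "lin_indep_family (\<lambda>i. rvec (fst (f i))) \<longleftrightarrow> det (\<chi> i. w (f i)) \<noteq> 0" for f
    using det_rows_nz_iff[of "\<lambda>i. w (f i)"] by (simp add: w_def)
  show ?thesis
  proof
    assume L: "\<forall>\<kappa> c. (\<forall>r\<in>R. \<kappa> r > 0) \<longrightarrow> (\<forall>i. c $ i > 0) \<longrightarrow>
            (\<exists>v. v \<in> stoich_space R \<and> v \<noteq> 0 \<and> jacobian (rate_fun R \<kappa>) c *v v = 0)"
    have D0: "det (Mb b) = 0" if bpos: "\<forall>r\<in>R. b r > 0" for b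
    proof -
      let ?c = "(\<chi> i. 1) :: real ^ 'n"
      have cpos: "\<forall>i. ?c $ i > 0" by simp
      obtain v where v: "v \<noteq> 0" "jacobian (rate_fun R b) ?c *v v = 0" using L bpos cpos by blast
      have m1: "monom ?c y = 1" for y by (simp add: monom_def)
      have "Mb b *v v = 0" using v(2) JE[OF cpos, of b v] by (simp add: m1)
      then show ?thesis using det_zero_iff_ker v(1) by blast
    qed
    show "\<forall>r :: 'n \<Rightarrow> 'n reaction. (\<forall>i. r i \<in> R) \<longrightarrow>
            lin_indep_family (\<lambda>i. rvec (fst (r i)) - rvec (snd (r i))) \<longrightarrow>
            \<not> lin_indep_family (\<lambda>i. rvec (fst (r i)))"
    proof (intro allI impI notI)
      fix r :: "'n \<Rightarrow> 'n reaction"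
      assume rR: "\<forall>i. r i \<in> R" and li1: "lin_indep_family (\<lambda>i. rvec (fst (r i)) - rvec (snd (r i)))"
        and li2: "lin_indep_family (\<lambda>i. rvec (fst (r i)))"
      have dU: "det (\<chi> i. u (r i)) \<noteq> 0" using li1 Uiff by blast
      have dW: "det (\<chi> i. w (r i)) \<noteq> 0" using li2 Wiff by blast
      have injr: "inj r" using li2 unfolding lin_indep_family_def inj_def by metis
      define S where "S = range r"
      define F1 where "F1 = {f :: 'n \<Rightarrow> 'n reaction. \<forall>i. f i \<in> S}"
      have F1F: "F1 \<subseteq> F" unfolding F1_def F_eq S_def using rR by (smt (verit, best) imageE mem_Collect_eq subsetI)
      define A where "A = (\<Sum>f\<in>F1. det (\<chi> i. w (f i)) * det (\<chi> i. u (f i)))"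
      have A_eq: "A = of_nat (fact CARD('n)) * (det (\<chi> i. w (r i)) * det (\<chi> i. u (r i)))"
        unfolding A_def F1_def S_def by (rule sum_onto_range[OF injr])
      have Anz: "A \<noteq> 0" using A_eq dU dW by simp
      define K where "K = (\<Sum>f\<in>F. \<bar>det (\<chi> i. w (f i)) * det (\<chi> i. u (f i))\<bar>)"
      have K0: "K \<ge> 0" unfolding K_def by (rule sum_nonneg) simp
      have bound: "\<bar>A\<bar> \<le> e * K" if e: "0 < e" "e \<le> 1" for e
      proof -
        define b where "b x = (if x \<in> S then 1 else e)" for x
        have "\<forall>x\<in>R. b x > 0" using e by (simp add: b_def)
        then have "det (Mb b) = 0" by (rule D0)
        then have "0 = (\<Sum>f\<in>F. (\<Prod>i\<in>UNIV. b (f i)) * det (\<chi> i. w (f i)) * det (\<chi> i. u (f i)))"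
          using CB[of b] by simp
        also have "\<dots> = (\<Sum>f\<in>F1. (\<Prod>i\<in>UNIV. b (f i)) * det (\<chi> i. w (f i)) * det (\<chi> i. u (f i)))
             + (\<Sum>f\<in>F - F1. (\<Prod>i\<in>UNIV. b (f i)) * det (\<chi> i. w (f i)) * det (\<chi> i. u (f i)))"
          using sum.subset_diff[OF F1F finF] by (simp add: add.commute)
        also have "(\<Sum>f\<in>F1. (\<Prod>i\<in>UNIV. b (f i)) * det (\<chi> i. w (f i)) * det (\<chi> i. u (f i))) = A"
          unfolding A_def by (rule sum.cong[OF refl]) (simp add: F1_def b_def)
        finally have eqA: "A = - (\<Sum>f\<in>F - F1. (\<Prod>i\<in>UNIV. b (f i)) * det (\<chi> i. w (f i)) * det (\<chi> i. u (f i)))"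
          by simp
        have pb: "\<bar>\<Prod>i\<in>UNIV. b (f i)\<bar> \<le> e" if fF: "f \<in> F - F1" for f
        proof -
          obtain k where k: "f k \<notin> S" using fF unfolding F1_def by blast
          have "(\<Prod>i\<in>UNIV. b (f i)) = b (f k) * (\<Prod>i\<in>UNIV - {k}. b (f i))"
            by (simp add: prod.remove)
          moreover have "b (f k) = e" using k by (simp add: b_def)
          moreover have "0 \<le> (\<Prod>i\<in>UNIV - {k}. b (f i))" "(\<Prod>i\<in>UNIV - {k}. b (f i)) \<le> 1"
            using e by (auto simp: b_def intro!: prod_nonneg prod_le_1 split: if_splits)
          ultimately show ?thesis using e
            by (simp add: abs_mult)
        qed
        have "\<bar>A\<bar> \<le> (\<Sum>f\<in>F - F1. \<bar>(\<Prod>i\<in>UNIV. b (f i)) * det (\<chi> i. w (f i)) * det (\<chi> i. u (f i))\<bar>)"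
          unfolding eqA abs_minus_cancel by (rule sum_abs)
        also have "\<dots> \<le> (\<Sum>f\<in>F - F1. e * \<bar>det (\<chi> i. w (f i)) * det (\<chi> i. u (f i))\<bar>)"
        proof (rule sum_mono)
          fix f assume "f \<in> F - F1"
          then show "\<bar>(\<Prod>i\<in>UNIV. b (f i)) * det (\<chi> i. w (f i)) * det (\<chi> i. u (f i))\<bar>
              \<le> e * \<bar>det (\<chi> i. w (f i)) * det (\<chi> i. u (f i))\<bar>"
            using pb[of f] by (simp add: abs_mult mult.assoc mult_right_mono)
        qed
        also have "\<dots> \<le> (\<Sum>f\<in>F. e * \<bar>det (\<chi> i. w (f i)) * det (\<chi> i. u (f i))\<bar>)"
          by (rule sum_mono2[OF finF]) (use e in auto)
        also have "\<dots> = e * K" by (simp add: K_def sum_distrib_left)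
        finally show ?thesis .
      qed
      define e where "e = min 1 (\<bar>A\<bar> / (2 * (K + 1)))"
      have e0: "0 < e" "e \<le> 1" using Anz K0 by (auto simp: e_def)
      have "e * K \<le> \<bar>A\<bar> / (2 * (K + 1)) * K"
        using K0 by (intro mult_right_mono) (auto simp: e_def)
      also have "\<dots> < \<bar>A\<bar>"
        using Anz K0 by (simp add: field_simps) (smt (verit) mult_nonneg_nonneg zero_less_abs_iff)
      finally show False using bound[OF e0] by simp
    qed
  next
    assume Q: "\<forall>r :: 'n \<Rightarrow> 'n reaction. (\<forall>i. r i \<in> R) \<longrightarrow>
            lin_indep_family (\<lambda>i. rvec (fst (r i)) - rvec (snd (r i))) \<longrightarrow>
            \<not> lin_indep_family (\<lambda>i. rvec (fst (r i)))"
    show "\<forall>\<kappa> c. (\<forall>r\<in>R. \<kappa> r > 0) \<longrightarrow> (\<forall>i. c $ i > 0) \<longrightarrow>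
            (\<exists>v. v \<in> stoich_space R \<and> v \<noteq> 0 \<and> jacobian (rate_fun R \<kappa>) c *v v = 0)"
    proof (intro allI impI)
      fix \<kappa> and c :: "real ^ 'n"
      assume cpos: "\<forall>i. c $ i > 0"
      define b where "b r = \<kappa> r * monom c (fst r)" for r :: "'n reaction"
      have terms: "(\<Prod>i\<in>UNIV. b (f i)) * det (\<chi> i. w (f i)) * det (\<chi> i. u (f i)) = 0" if "f \<in> F" for f
      proof -
        have "\<forall>i. f i \<in> R" using that by (simp add: F_eq)
        then have "det (\<chi> i. u (f i)) = 0 \<or> det (\<chi> i. w (f i)) = 0" using Q Uiff Wiff by blast
        then show ?thesis by auto
      qed
      have "of_nat (fact CARD('n)) * det (Mb b) = 0" unfolding CB by (rule sum.neutral) (use terms in blast)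
      then have "det (Mb b) = 0" by simp
      then obtain z where z: "z \<noteq> 0" "Mb b *v z = 0" using det_zero_iff_ker by blast
      define v where "v = (\<chi> j. z $ j * c $ j)"
      have vz: "(\<chi> j. v $ j / c $ j) = z" using cpos by (simp add: v_def vec_eq_iff) (metis less_irrefl)
      have "v \<noteq> 0"
      proof
        assume "v = 0"
        then have "z = 0" using vz by (simp add: vec_eq_iff)
        with z show False by simp
      qed
      moreover have "jacobian (rate_fun R \<kappa>) c *v v = 0"
        using JE[OF cpos, of \<kappa> v] vz z(2) by (simp add: b_def[abs_def])
      ultimately show "\<exists>v. v \<in> stoich_space R \<and> v \<noteq> 0 \<and> jacobian (rate_fun R \<kappa>) c *v v = 0"
        using stU by blast
    qed
  qed
qed

end
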